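(* Let $N$ be a Poisson random variable with mean $\bar m>0$ and $d_1,d_2,\dots$ i.i.d. positive random variables independent of $N$ with $\Pr(d_n\le\rho)=2\pi\int_0^\rho f(r)\,r\,dr$. Let $P'=\eta g\sum_{n=1}^N d_n^{-\alpha_1}$ and $p_0'=\Pr\big(P'\le\frac{P_c}{1-\beta D}\big)$. Then: (Matern) if $\mu^*>0$ satisfies $\int_0^{a^2}t^{-\alpha_1/2}e^{-\mu^*t^{-\alpha_1/2}}dt=\frac{a^2P_c(\eta g)^{-1}}{\bar m(1-\beta D)}$, then $$p_0'\le\exp\Big(\frac{\mu^*P_c}{(1-\beta D)\eta g}-\frac{\bar m}{a^2}\int_0^{a^2}\big(1-e^{-\mu^*t^{-\alpha_1/2}}\big)dt\Big);$$ (Thomas) if $\mu^*>0$ satisfies $\int_0^\infty\frac{e^{-t-\mu^*(\sqrt2\sigma)^{-\alpha_1}t^{-\alpha_1/2}}}{(\sqrt2\sigma)^{\alpha_1}t^{\alpha_1/2}}dt=\frac{P_c(\eta g)^{-1}}{\bar m(1-\beta D)}$, then $$p_0'\le\exp\Big(\frac{\mu^*P_c}{(1-\beta D)\eta g}-\bar m\int_0^\infty e^{-t}\big(1-e^{-\mu^*(\sqrt2\sigma)^{-\alpha_1}t^{-\alpha_1/2}}\big)dt\Big).$$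
   Context: Parameters: duty cycle $D\in(0,1]$, reflection coefficient $\beta\in(0,1]$, $\eta>0$, $g>0$, circuit power $P_c>0$, path-loss exponent $\alpha_1>0$. The function $f$ is one of: (Matern) $f(r)=\frac{1}{\pi a^2}$ for $0\le r\le a$, $0$ otherwise ($a>0$); (Thomas) $f(r)=\frac{1}{2\pi\sigma^2}e^{-r^2/(2\sigma^2)}$ ($\sigma>0$). Here $P'$ is the power received by a backscatter node from a Poisson cluster of power beacons and $p_0'$ its power-outage probability. *)

theory Defs
  imports "HOL-Probability.Probability"
begin

definition matern_f :: "real \<Rightarrow> real \<Rightarrow> real" where
  "matern_f a r = (if 0 \<le> r \<and> r \<le> a then 1 / (pi * a\<^sup>2) else 0)"

definition thomas_f :: "real \<Rightarrow> real \<Rightarrow> real" where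
  "thomas_f \<sigma> r = 1 / (2 * pi * \<sigma>\<^sup>2) * exp (- r\<^sup>2 / (2 * \<sigma>\<^sup>2))"

end

theory Submission
  imports Defs
begin


lemma chernoff:
  fixes M :: "'w measure" and S :: "'w \<Rightarrow> real"
  assumes S: "S \<in> borel_measurable M" and mu: "0 < \<mu>"
  shows "emeasure M {\<omega>\<in>space M. S \<omega> \<le> c} \<le> ennreal (exp (\<mu> * c)) * (\<integral>\<^sup>+\<omega>. ennreal (exp (- \<mu> * S \<omega>)) \<partial>M)"
proof -
  have "emeasure M {\<omega>\<in>space M. S \<omega> \<le> c} = (\<integral>\<^sup>+\<omega>. indicator {\<omega>\<in>space M. S \<omega> \<le> c} \<omega> \<partial>M)"
    using S by (intro nn_integral_indicator[symmetric]) measurable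
  also have "\<dots> \<le> (\<integral>\<^sup>+\<omega>. ennreal (exp (\<mu> * c)) * ennreal (exp (- \<mu> * S \<omega>)) \<partial>M)"
  proof (intro nn_integral_mono)
    fix \<omega> assume "\<omega> \<in> space M"
    show "indicator {\<omega>\<in>space M. S \<omega> \<le> c} \<omega> \<le> ennreal (exp (\<mu> * c)) * ennreal (exp (- \<mu> * S \<omega>))"
    proof (cases "S \<omega> \<le> c")
      case True
      have "0 \<le> \<mu> * c - \<mu> * S \<omega>" using True mu
        by (simp add: mult_left_mono)
      then have "1 \<le> exp (\<mu> * c - \<mu> * S \<omega>)" by simp
      also have "exp (\<mu> * c - \<mu> * S \<omega>) = exp (\<mu> * c) * exp (- \<mu> * S \<omega>)"
        by (simp add: exp_diff exp_minus field_simps)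
      finally have "1 \<le> exp (\<mu> * c) * exp (- \<mu> * S \<omega>)" .
      then show ?thesis using \<open>\<omega> \<in> space M\<close> True
        by (simp add: ennreal_mult[symmetric] indicator_def)
    qed simp
  qed
  also have "\<dots> = ennreal (exp (\<mu> * c)) * (\<integral>\<^sup>+\<omega>. ennreal (exp (- \<mu> * S \<omega>)) \<partial>M)"
    using S by (intro nn_integral_cmult) measurable
  finally show ?thesis .
qed

lemma compound_poisson:
  fixes M :: "'w measure" and N :: "'w \<Rightarrow> nat" and d :: "nat \<Rightarrow> 'w \<Rightarrow> real"
    and G :: "real \<Rightarrow> real"
  assumes P: "prob_space M" and m: "0 < m"
    and N_meas: "N \<in> measurable M (count_space UNIV)"
    and N_poisson: "distr M (count_space UNIV) N = measure_pmf (poisson_pmf m)"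
    and d_meas: "\<And>n. d n \<in> borel_measurable M"
    and indep: "prob_space.indep_vars M (\<lambda>_. borel)
        (\<lambda>i \<omega>. case i of None \<Rightarrow> real (N \<omega>) | Some n \<Rightarrow> d n \<omega>) (UNIV :: nat option set)"
    and G: "G \<in> borel_measurable borel" "\<And>x. 0 \<le> G x" "\<And>x. G x \<le> 1"
    and phi: "\<And>n. prob_space.expectation M (\<lambda>\<omega>. G (d n \<omega>)) = \<phi>"
  shows "(\<integral>\<^sup>+\<omega>. ennreal (\<Prod>n<N \<omega>. G (d n \<omega>)) \<partial>M) = ennreal (exp (- m * (1 - \<phi>)))"
proof -
  interpret prob_space M by fact
  note [measurable] = N_meas d_meas G(1)
  have phi0: "0 \<le> \<phi>" using phi[of 0] G(2) by (metis integral_nonneg_AE AE_I2)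
  define F where "F k \<omega> = indicator {real k} (real (N \<omega>)) * (\<Prod>n<k. G (d n \<omega>))" for k \<omega>
  have Fmeas[measurable]: "F k \<in> borel_measurable M" for k unfolding F_def by measurable
  have F0: "0 \<le> F k \<omega>" for k \<omega> unfolding F_def using G(2) by (simp add: prod_nonneg)
  have pt: "ennreal (\<Prod>n<N \<omega>. G (d n \<omega>)) = (\<Sum>k. ennreal (F k \<omega>))" for \<omega>
  proof -
    have "(\<lambda>k. ennreal (F k \<omega>)) = (\<lambda>k. if k = N \<omega> then ennreal (\<Prod>n<N \<omega>. G (d n \<omega>)) else 0)"
      by (auto simp: F_def fun_eq_iff)
    then show ?thesis using sums_single[of "N \<omega>" "\<lambda>_. ennreal (\<Prod>n<N \<omega>. G (d n \<omega>))"]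
      by (simp add: sums_iff)
  qed
  have EF: "expectation (F k) = pmf (poisson_pmf m) k * \<phi> ^ k" for k
  proof -
    define Y :: "nat option \<Rightarrow> real \<Rightarrow> real" where "Y i x = (case i of None \<Rightarrow> indicator {real k} x | Some n \<Rightarrow> G x)" for i and x :: real
    define X :: "nat option \<Rightarrow> 'w \<Rightarrow> real" where "X i \<omega> = (case i of None \<Rightarrow> real (N \<omega>) | Some n \<Rightarrow> d n \<omega>)" for i \<omega>
    define I :: "nat option set" where "I = insert None (Some ` {..<k})"
    have indI: "indep_vars (\<lambda>_. borel) (\<lambda>i \<omega>. Y i (X i \<omega>)) I"
      apply (rule indep_vars_compose2[where M'="\<lambda>_. borel" and X=X and Y=Y and N="\<lambda>_. borel", simplified])
       apply (rule indep_vars_subset[OF indep[folded X_def]])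
    proof -
      fix i :: "nat option"
      have "Y None = indicator {real k}" "\<And>n. Y (Some n) = G" by (auto simp: Y_def fun_eq_iff)
      then show "Y i \<in> borel_measurable borel" by (cases i) (auto simp: G(1))
    qed simp
    have "expectation (\<lambda>\<omega>. \<Prod>i\<in>I. Y i (X i \<omega>)) = (\<Prod>i\<in>I. expectation (\<lambda>\<omega>. Y i (X i \<omega>)))"
      by (rule indep_vars_lebesgue_integral[OF _ indI]) (auto simp: I_def intro!: integrable_const_bound[where B=1]
           simp: Y_def X_def G split: option.split)
    moreover have "(\<lambda>\<omega>. \<Prod>i\<in>I. Y i (X i \<omega>)) = F k"
      by (auto simp: fun_eq_iff I_def F_def prod.reindex Y_def X_def)
    moreover have "(\<Prod>i\<in>I. expectation (\<lambda>\<omega>. Y i (X i \<omega>))) =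
        expectation (\<lambda>\<omega>. indicator {real k} (real (N \<omega>))) * \<phi> ^ k"
      by (simp add: I_def prod.reindex Y_def X_def phi)
    moreover have "expectation (\<lambda>\<omega>. indicator {real k} (real (N \<omega>)) :: real) = pmf (poisson_pmf m) k"
    proof -
      have "expectation (\<lambda>\<omega>. indicator {real k} (real (N \<omega>)) :: real)
          = expectation (\<lambda>\<omega>. indicator {k} (N \<omega>) :: real)"
        by (auto intro!: Bochner_Integration.integral_cong simp: indicator_def)
      also have "\<dots> = integral\<^sup>L (distr M (count_space UNIV) N) (indicator {k})"
        by (subst integral_distr) auto
      also have "\<dots> = measure (measure_pmf (poisson_pmf m)) {k}"
        unfolding N_poisson by simp
      finally show ?thesis by (simp add: measure_pmf_single)
    qed
    ultimately show ?thesis by simp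
  qed
  have "(\<integral>\<^sup>+\<omega>. ennreal (\<Prod>n<N \<omega>. G (d n \<omega>)) \<partial>M) = (\<integral>\<^sup>+\<omega>. (\<Sum>k. ennreal (F k \<omega>)) \<partial>M)"
    by (simp add: pt)
  also have "\<dots> = (\<Sum>k. \<integral>\<^sup>+\<omega>. ennreal (F k \<omega>) \<partial>M)"
    by (rule nn_integral_suminf) measurable
  also have "\<dots> = (\<Sum>k. ennreal (m ^ k / fact k * exp (-m) * \<phi> ^ k))"
  proof (intro suminf_cong)
    fix k
    have "(\<integral>\<^sup>+\<omega>. ennreal (F k \<omega>) \<partial>M) = ennreal (expectation (F k))"
      by (intro nn_integral_eq_integral integrable_const_bound[where B=1])
        (auto simp: F0 F_def G abs_prod intro!: prod_le_1 prod_nonneg simp: indicator_def)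
    then show "(\<integral>\<^sup>+\<omega>. ennreal (F k \<omega>) \<partial>M) = ennreal (m ^ k / fact k * exp (-m) * \<phi> ^ k)"
      using EF m by simp
  qed
  also have "\<dots> = ennreal (exp (- m * (1 - \<phi>)))"
  proof -
    have s: "(\<lambda>k. m ^ k / fact k * exp (-m) * \<phi> ^ k) sums (exp (m * \<phi>) * exp (-m))"
    proof -
      have "(\<lambda>k. (m * \<phi>) ^ k /\<^sub>R fact k * exp (-m)) sums (exp (m * \<phi>) * exp (-m))"
        by (rule sums_mult2[OF exp_converges])
      then show ?thesis by (simp add: power_mult_distrib field_simps)
    qed
    have "(\<Sum>k. ennreal (m ^ k / fact k * exp (-m) * \<phi> ^ k)) = ennreal (exp (m * \<phi>) * exp (-m))"
      using s m phi0 by (subst suminf_ennreal2) (auto simp: sums_iff)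
    then show ?thesis by (simp add: mult_exp_exp algebra_simps)
  qed
  finally show ?thesis .
qed

lemma bound:
  fixes M :: "'w measure" and N :: "'w \<Rightarrow> nat" and d :: "nat \<Rightarrow> 'w \<Rightarrow> real"
  assumes P: "prob_space M" and m: "0 < m"
    and N_meas: "N \<in> measurable M (count_space UNIV)"
    and N_poisson: "distr M (count_space UNIV) N = measure_pmf (poisson_pmf m)"
    and d_meas: "\<And>n. d n \<in> borel_measurable M"
    and indep: "prob_space.indep_vars M (\<lambda>_. borel)
        (\<lambda>i \<omega>. case i of None \<Rightarrow> real (N \<omega>) | Some n \<Rightarrow> d n \<omega>) (UNIV :: nat option set)"
    and eg: "0 < \<eta> * g" and mu: "0 < \<mu>"
    and phi: "\<And>n. prob_space.expectation M (\<lambda>\<omega>. exp (- \<mu> * d n \<omega> powr (- \<alpha>))) = 1 - \<psi>"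
  shows "measure M {\<omega>\<in>space M. \<eta> * g * (\<Sum>n<N \<omega>. d n \<omega> powr (- \<alpha>)) \<le> K}
     \<le> exp (\<mu> * K / (\<eta> * g) - m * \<psi>)"
proof -
  interpret prob_space M by fact
  note [measurable] = N_meas d_meas
  define S where "S \<omega> = (\<Sum>n<N \<omega>. d n \<omega> powr (- \<alpha>))" for \<omega>
  have Sm[measurable]: "S \<in> borel_measurable M" unfolding S_def by measurable
  have set: "{\<omega>\<in>space M. \<eta> * g * (\<Sum>n<N \<omega>. d n \<omega> powr (- \<alpha>)) \<le> K}
      = {\<omega>\<in>space M. S \<omega> \<le> K / (\<eta> * g)}"
    using eg by (auto simp: S_def pos_le_divide_eq mult.commute)
  define G where "G x = exp (- \<mu> * x powr (- \<alpha>))" for x :: real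
  have Gm: "G \<in> borel_measurable borel" unfolding G_def by measurable
  have G01: "0 \<le> G x" "G x \<le> 1" for x unfolding G_def using mu by auto
  have eS: "exp (- \<mu> * S \<omega>) = (\<Prod>n<N \<omega>. G (d n \<omega>))" for \<omega>
    by (simp add: S_def G_def sum_distrib_left exp_sum)
  have "emeasure M {\<omega>\<in>space M. S \<omega> \<le> K / (\<eta> * g)}
      \<le> ennreal (exp (\<mu> * (K / (\<eta> * g)))) * (\<integral>\<^sup>+\<omega>. ennreal (exp (- \<mu> * S \<omega>)) \<partial>M)"
    by (rule chernoff[OF Sm mu])
  also have "(\<integral>\<^sup>+\<omega>. ennreal (exp (- \<mu> * S \<omega>)) \<partial>M) = ennreal (exp (- m * (1 - (1 - \<psi>))))"
    unfolding eS
    by (rule compound_poisson[OF P m N_meas N_poisson d_meas indep Gm G01]) (use phi in \<open>simp add: G_def\<close>)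
  also have "ennreal (exp (\<mu> * (K / (\<eta> * g)))) * ennreal (exp (- m * (1 - (1 - \<psi>))))
      = ennreal (exp (\<mu> * K / (\<eta> * g) - m * \<psi>))"
    by (simp add: ennreal_mult[symmetric] exp_diff exp_minus field_simps)
  finally show ?thesis unfolding set
    by (simp add: emeasure_eq_measure)
qed



lemma sqrt_le_iff_sq: "0 \<le> x \<Longrightarrow> 0 \<le> t \<Longrightarrow> x \<le> sqrt t \<longleftrightarrow> x\<^sup>2 \<le> t"
  by (metis abs_of_nonneg real_le_rsqrt real_sqrt_abs real_sqrt_le_iff)

lemma matern_int:
  assumes a: "0 < a" and r: "0 \<le> \<rho>" "\<rho> \<le> a"
  shows "2 * pi * (LBINT r=0..\<rho>. matern_f a r * r) = \<rho>\<^sup>2 / a\<^sup>2"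
proof -
  have "(LBINT r=0..\<rho>. matern_f a r * r) = (LBINT r=0..\<rho>. r / (pi * a\<^sup>2))"
    using r by (intro interval_integral_cong) (auto simp: matern_f_def einterval_def)
  also have "\<dots> = (LBINT r=ereal 0..ereal \<rho>. r / (pi * a\<^sup>2))" by (simp add: zero_ereal_def)
  also have "\<dots> = \<rho>\<^sup>2 / (2 * pi * a\<^sup>2) - 0\<^sup>2 / (2 * pi * a\<^sup>2)"
    using r
  proof (intro interval_integral_FTC_finite continuous_intros)
    fix x :: real
    show "((\<lambda>r. r\<^sup>2 / (2 * pi * a\<^sup>2)) has_vector_derivative x / (pi * a\<^sup>2)) (at x within {min 0 \<rho>..max 0 \<rho>})"
      unfolding has_real_derivative_iff_has_vector_derivative[symmetric]
      using a by (intro derivative_eq_intros refl) (auto simp: field_simps power2_eq_square)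
  qed (use a in auto)
  finally show ?thesis using a by (simp add: field_simps)
qed



lemma matern_expect:
  fixes M :: "'w measure" and X :: "'w \<Rightarrow> real"
  assumes P: "prob_space M" and Xm[measurable]: "X \<in> borel_measurable M"
    and pos: "\<And>\<omega>. \<omega> \<in> space M \<Longrightarrow> 0 < X \<omega>"
    and cdf: "\<And>\<rho>. 0 \<le> \<rho> \<Longrightarrow> measure M {\<omega> \<in> space M. X \<omega> \<le> \<rho>} = 2 * pi * (LBINT r=0..\<rho>. matern_f a r * r)"
    and a: "0 < a" and mu: "0 < \<mu>"
  shows "prob_space.expectation M (\<lambda>\<omega>. exp (- \<mu> * X \<omega> powr (- \<alpha>)))
     = 1 - (1 / a\<^sup>2 * (LINT t:{0..a\<^sup>2}|lborel. 1 - exp (- \<mu> * t powr (- \<alpha> / 2))))"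
proof -
  interpret prob_space M by fact
  define T where "T \<omega> = (X \<omega>)\<^sup>2" for \<omega>
  have Tm[measurable]: "T \<in> borel_measurable M" unfolding T_def by measurable
  have D: "distributed M lborel T (\<lambda>x. indicator {0..a\<^sup>2} x / measure lborel {0..a\<^sup>2})"
  proof (rule uniform_distrI_borel_atLeastAtMost[OF Tm])
    show "0 < a\<^sup>2" using a by simp
    fix t :: real assume t: "0 \<le> t" "t \<le> a\<^sup>2"
    have "{\<omega> \<in> space M. T \<omega> \<le> t} = {\<omega> \<in> space M. X \<omega> \<le> sqrt t}"
      using pos t by (auto simp: T_def sqrt_le_iff_sq less_imp_le)
    moreover have "sqrt t \<le> a" using t a by (metis abs_of_pos real_sqrt_abs real_sqrt_le_mono)
    ultimately show "prob {\<omega> \<in> space M. T \<omega> \<le> t} = (t - 0) / (a\<^sup>2 - 0)"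
      using cdf[of "sqrt t"] matern_int[OF a, of "sqrt t"] t by simp
  qed
  define h where "h t = 1 - exp (- \<mu> * t powr (- \<alpha> / 2))" for t :: real
  have hm[measurable]: "h \<in> borel_measurable borel" unfolding h_def by measurable
  have "(\<integral>x. indicator {0..a\<^sup>2} x / measure lborel {0..a\<^sup>2} * h x \<partial>lborel) = expectation (\<lambda>\<omega>. h (T \<omega>))"
    proof (rule distributed_integral[OF D])
    show "h \<in> borel_measurable lborel" using hm by simp
  qed (simp add: measure_nonneg)
  moreover have "(\<integral>x. indicator {0..a\<^sup>2} x / measure lborel {0..a\<^sup>2} * h x \<partial>lborel)
      = 1 / a\<^sup>2 * (LINT t:{0..a\<^sup>2}|lborel. h t)"
    by (simp add: set_lebesgue_integral_def)
  moreover have "expectation (\<lambda>\<omega>. h (T \<omega>)) = expectation (\<lambda>\<omega>. 1 - exp (- \<mu> * X \<omega> powr (- \<alpha>)))"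
  proof (intro Bochner_Integration.integral_cong refl)
    fix \<omega> assume "\<omega> \<in> space M"
    then have "0 < X \<omega>" by (rule pos)
    then have "T \<omega> powr (- \<alpha> / 2) = X \<omega> powr (- \<alpha>)"
    proof -
      have "T \<omega> = X \<omega> powr 2" using \<open>0 < X \<omega>\<close> by (simp add: T_def powr_realpow)
      then have "T \<omega> powr (- \<alpha> / 2) = X \<omega> powr (2 * (- \<alpha> / 2))" by (simp only: powr_powr)
      then show ?thesis by simp
    qed
    then show "h (T \<omega>) = 1 - exp (- \<mu> * X \<omega> powr (- \<alpha>))" by (simp add: h_def)
  qed
  moreover have "expectation (\<lambda>\<omega>. 1 - exp (- \<mu> * X \<omega> powr (- \<alpha>))) = 1 - expectation (\<lambda>\<omega>. exp (- \<mu> * X \<omega> powr (- \<alpha>)))"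
    by (subst Bochner_Integration.integral_diff) (use mu in \<open>auto intro!: integrable_const_bound[where B=1] simp: prob_space\<close>)
  ultimately show ?thesis unfolding h_def by simp
qed



lemma thomas_int:
  assumes s: "0 < \<sigma>" and r: "0 \<le> \<rho>"
  shows "2 * pi * (LBINT r=0..\<rho>. thomas_f \<sigma> r * r) = 1 - exp (- \<rho>\<^sup>2 / (2 * \<sigma>\<^sup>2))"
proof -
  have "(LBINT r=0..\<rho>. thomas_f \<sigma> r * r) = (LBINT r=ereal 0..ereal \<rho>. thomas_f \<sigma> r * r)"
    by (simp add: zero_ereal_def)
  also have "\<dots> = (- exp (- (\<rho> * \<rho>) / (2 * \<sigma>\<^sup>2)) / (2 * pi)) - (- exp (- (0 * 0) / (2 * \<sigma>\<^sup>2)) / (2 * pi))"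
  proof (intro interval_integral_FTC_finite)
    show "continuous_on {min 0 \<rho>..max 0 \<rho>} (\<lambda>r. thomas_f \<sigma> r * r)"
      unfolding thomas_f_def using s by (auto intro!: continuous_intros)
    fix x :: real
    have "((\<lambda>r. - exp (- (r * r) / (2 * \<sigma>\<^sup>2)) / (2 * pi)) has_real_derivative
        (- (exp (- (x * x) / (2 * \<sigma>\<^sup>2)) * (- (x + x) / (2 * \<sigma>\<^sup>2))) / (2 * pi))) (at x within {min 0 \<rho>..max 0 \<rho>})"
      using s by (auto intro!: derivative_eq_intros simp: field_simps)
    moreover have "- (exp (- (x * x) / (2 * \<sigma>\<^sup>2)) * (- (x + x) / (2 * \<sigma>\<^sup>2))) / (2 * pi) = thomas_f \<sigma> x * x"
    proof -
      have e: "exp (- (x * x) / (2 * \<sigma>\<^sup>2)) = exp (- x\<^sup>2 / (2 * \<sigma>\<^sup>2))" by (simp add: power2_eq_square)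
      show ?thesis unfolding thomas_f_def e using s by (simp add: divide_simps)
    qed
    ultimately show "((\<lambda>r. - exp (- (r * r) / (2 * \<sigma>\<^sup>2)) / (2 * pi)) has_vector_derivative thomas_f \<sigma> x * x) (at x within {min 0 \<rho>..max 0 \<rho>})"
      by (simp add: has_real_derivative_iff_has_vector_derivative)
  qed
  finally show ?thesis by (simp add: power2_eq_square diff_divide_distrib[symmetric])
qed

lemma thomas_expect:
  fixes M :: "'w measure" and X :: "'w \<Rightarrow> real"
  assumes P: "prob_space M" and Xm[measurable]: "X \<in> borel_measurable M"
    and pos: "\<And>\<omega>. \<omega> \<in> space M \<Longrightarrow> 0 < X \<omega>"
    and cdf: "\<And>\<rho>. 0 \<le> \<rho> \<Longrightarrow> measure M {\<omega> \<in> space M. X \<omega> \<le> \<rho>} = 2 * pi * (LBINT r=0..\<rho>. thomas_f \<sigma> r * r)"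
    and s: "0 < \<sigma>" and mu: "0 < \<mu>"
  shows "prob_space.expectation M (\<lambda>\<omega>. exp (- \<mu> * X \<omega> powr (- \<alpha>)))
     = 1 - (LINT t:{0<..}|lborel. exp (- t) * (1 - exp (- \<mu> * (sqrt 2 * \<sigma>) powr (-\<alpha>) * t powr (-\<alpha>/2))))"
proof -
  interpret prob_space M by fact
  define T where "T \<omega> = (X \<omega> / (sqrt 2 * \<sigma>))\<^sup>2" for \<omega>
  have Tm[measurable]: "T \<in> borel_measurable M" unfolding T_def by measurable
  have sq: "(sqrt 2 * \<sigma>)\<^sup>2 = 2 * \<sigma>\<^sup>2" by (simp add: power_mult_distrib)
  have D: "distributed M lborel T (exponential_density 1)"
  proof (rule exponential_distributedI[OF Tm, where l=1])
    fix t :: real assume t: "0 \<le> t"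
    have "{\<omega> \<in> space M. T \<omega> \<le> t} = {\<omega> \<in> space M. X \<omega> \<le> sqrt t * (sqrt 2 * \<sigma>)}"
    proof -
      have "T \<omega> \<le> t \<longleftrightarrow> X \<omega> \<le> sqrt t * (sqrt 2 * \<sigma>)" if "\<omega> \<in> space M" for \<omega>
      proof -
        have "0 \<le> X \<omega> / (sqrt 2 * \<sigma>)" using pos[OF that] s by simp
        then have "T \<omega> \<le> t \<longleftrightarrow> X \<omega> / (sqrt 2 * \<sigma>) \<le> sqrt t"
          using t by (simp add: T_def sqrt_le_iff_sq)
        also have "\<dots> \<longleftrightarrow> X \<omega> \<le> sqrt t * (sqrt 2 * \<sigma>)" using s by (simp add: divide_le_eq)
        finally show ?thesis .
      qed
      then show ?thesis by auto
    qed
    moreover have "(sqrt t * (sqrt 2 * \<sigma>))\<^sup>2 / (2 * \<sigma>\<^sup>2) = t"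
      using t s by (simp add: power_mult_distrib)
    ultimately have "prob {\<omega> \<in> space M. T \<omega> \<le> t} = 1 - exp (- t)"
      using cdf[of "sqrt t * (sqrt 2 * \<sigma>)"] thomas_int[OF s, of "sqrt t * (sqrt 2 * \<sigma>)"] t s by simp
    then show "emeasure M {\<omega> \<in> space M. T \<omega> \<le> t} = 1 - ennreal (exp (- t * 1))"
      by (simp add: emeasure_eq_measure ennreal_minus ennreal_1[symmetric] del: ennreal_1)
  qed simp
  define h where "h t = 1 - exp (- \<mu> * (sqrt 2 * \<sigma>) powr (-\<alpha>) * t powr (-\<alpha>/2))" for t :: real
  have hm[measurable]: "h \<in> borel_measurable borel" unfolding h_def by measurable
  have "(\<integral>x. exponential_density 1 x * h x \<partial>lborel) = expectation (\<lambda>\<omega>. h (T \<omega>))"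
  proof (rule distributed_integral[OF D])
    show "h \<in> borel_measurable lborel" using hm by simp
  qed (simp add: exponential_density_nonneg)
  moreover have "(\<integral>x. exponential_density 1 x * h x \<partial>lborel)
      = (LINT t:{0<..}|lborel. exp (- t) * h t)"
    unfolding set_lebesgue_integral_def
    by (intro integral_cong_AE) (auto intro!: eventually_mono[OF AE_lborel_singleton[of 0]] simp: exponential_density_def indicator_def)
  moreover have "expectation (\<lambda>\<omega>. h (T \<omega>)) = expectation (\<lambda>\<omega>. 1 - exp (- \<mu> * X \<omega> powr (- \<alpha>)))"
  proof (intro Bochner_Integration.integral_cong refl)
    fix \<omega> assume "\<omega> \<in> space M"
    then have X0: "0 < X \<omega>" by (rule pos)
    then have q0: "0 < X \<omega> / (sqrt 2 * \<sigma>)" using s by simp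
    have "T \<omega> = (X \<omega> / (sqrt 2 * \<sigma>)) powr 2" using q0 by (simp add: T_def powr_realpow)
    then have "T \<omega> powr (- \<alpha> / 2) = (X \<omega> / (sqrt 2 * \<sigma>)) powr (2 * (- \<alpha> / 2))" by (simp only: powr_powr)
    also have "\<dots> = X \<omega> powr (- \<alpha>) / (sqrt 2 * \<sigma>) powr (- \<alpha>)"
      using X0 s by (simp add: powr_divide)
    finally have "(sqrt 2 * \<sigma>) powr (-\<alpha>) * T \<omega> powr (- \<alpha> / 2) = X \<omega> powr (- \<alpha>)"
      using s by simp
    then show "h (T \<omega>) = 1 - exp (- \<mu> * X \<omega> powr (- \<alpha>))"
      unfolding h_def by (metis mult.assoc)
  qed
  moreover have "expectation (\<lambda>\<omega>. 1 - exp (- \<mu> * X \<omega> powr (- \<alpha>))) = 1 - expectation (\<lambda>\<omega>. exp (- \<mu> * X \<omega> powr (- \<alpha>)))"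
    by (subst Bochner_Integration.integral_diff) (use mu in \<open>auto intro!: integrable_const_bound[where B=1] simp: prob_space\<close>)
  ultimately show ?thesis unfolding h_def by simp
qed



theorem lemma5:
  fixes M :: "'w measure" and N :: "'w \<Rightarrow> nat" and d :: "nat \<Rightarrow> 'w \<Rightarrow> real"
    and f :: "real \<Rightarrow> real"
    and m D \<beta> \<eta> g Pc \<alpha>1 :: real
  assumes "prob_space M"
    and "0 < m"
    and "0 < D" "D \<le> 1" "0 < \<beta>" "\<beta> \<le> 1" "0 < \<eta>" "0 < g" "0 < Pc" "0 < \<alpha>1"
    and N_meas: "N \<in> measurable M (count_space UNIV)"
    and N_poisson: "distr M (count_space UNIV) N = measure_pmf (poisson_pmf m)"
    and d_meas: "\<And>n. d n \<in> borel_measurable M"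
    and d_pos: "\<And>n \<omega>. \<omega> \<in> space M \<Longrightarrow> 0 < d n \<omega>"
    and d_cdf: "\<And>n \<rho>. 0 \<le> \<rho> \<Longrightarrow>
        measure M {\<omega> \<in> space M. d n \<omega> \<le> \<rho>} = 2 * pi * (LBINT r=0..\<rho>. f r * r)"
    and indep: "prob_space.indep_vars M (\<lambda>_. borel)
        (\<lambda>i \<omega>. case i of None \<Rightarrow> real (N \<omega>) | Some n \<Rightarrow> d n \<omega>) (UNIV :: nat option set)"
  defines "P' \<equiv> (\<lambda>\<omega>. \<eta> * g * (\<Sum>n<N \<omega>. d n \<omega> powr (- \<alpha>1)))"
  defines "p0' \<equiv> measure M {\<omega> \<in> space M. P' \<omega> \<le> Pc / (1 - \<beta> * D)}"
  shows
    "(\<forall>a \<mu>. 0 < a \<longrightarrow> f = matern_f a \<longrightarrow> 0 < \<mu> \<longrightarrow>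
        (LINT t:{0..a\<^sup>2}|lborel. t powr (-\<alpha>1/2) * exp (- \<mu> * t powr (-\<alpha>1/2)))
          = a\<^sup>2 * Pc * inverse (\<eta> * g) / (m * (1 - \<beta> * D)) \<longrightarrow>
        p0' \<le> exp (\<mu> * Pc / ((1 - \<beta> * D) * \<eta> * g)
          - m / a\<^sup>2 * (LINT t:{0..a\<^sup>2}|lborel. 1 - exp (- \<mu> * t powr (-\<alpha>1/2)))))
   \<and> (\<forall>\<sigma> \<mu>. 0 < \<sigma> \<longrightarrow> f = thomas_f \<sigma> \<longrightarrow> 0 < \<mu> \<longrightarrow>
        (LINT t:{0<..}|lborel. exp (- t - \<mu> * (sqrt 2 * \<sigma>) powr (-\<alpha>1) * t powr (-\<alpha>1/2))
            / ((sqrt 2 * \<sigma>) powr \<alpha>1 * t powr (\<alpha>1/2)))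
          = Pc * inverse (\<eta> * g) / (m * (1 - \<beta> * D)) \<longrightarrow>
        p0' \<le> exp (\<mu> * Pc / ((1 - \<beta> * D) * \<eta> * g)
          - m * (LINT t:{0<..}|lborel. exp (- t) * (1 - exp (- \<mu> * (sqrt 2 * \<sigma>) powr (-\<alpha>1) * t powr (-\<alpha>1/2))))))"
proof -
  have key: "p0' \<le> exp (\<mu> * Pc / ((1 - \<beta> * D) * \<eta> * g) - m * \<psi>)"
    if mu: "0 < \<mu>" and phi: "\<And>n. prob_space.expectation M (\<lambda>\<omega>. exp (- \<mu> * d n \<omega> powr (- \<alpha>1))) = 1 - \<psi>"
    for \<mu> \<psi>
  proof -
    have eg: "0 < \<eta> * g" using assms by simp
    have "p0' \<le> exp (\<mu> * (Pc / (1 - \<beta> * D)) / (\<eta> * g) - m * \<psi>)"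
      unfolding p0'_def P'_def
      by (rule bound[OF assms(1,2) N_meas N_poisson d_meas indep eg mu phi])
    also have "\<mu> * (Pc / (1 - \<beta> * D)) / (\<eta> * g) = \<mu> * Pc / ((1 - \<beta> * D) * \<eta> * g)"
      by (simp add: mult.assoc)
    finally show ?thesis .
  qed
  show ?thesis
  proof (intro conjI allI impI)
    fix a \<mu> :: real assume a: "0 < a" and f: "f = matern_f a" and mu: "0 < \<mu>"
    have "p0' \<le> exp (\<mu> * Pc / ((1 - \<beta> * D) * \<eta> * g)
          - m * (1 / a\<^sup>2 * (LINT t:{0..a\<^sup>2}|lborel. 1 - exp (- \<mu> * t powr (-\<alpha>1/2)))))"
      by (rule key[OF mu matern_expect[OF assms(1) d_meas d_pos d_cdf[unfolded f] a mu]])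
    then show "p0' \<le> exp (\<mu> * Pc / ((1 - \<beta> * D) * \<eta> * g)
          - m / a\<^sup>2 * (LINT t:{0..a\<^sup>2}|lborel. 1 - exp (- \<mu> * t powr (-\<alpha>1/2))))"
      by simp
  next
    fix \<sigma> \<mu> :: real assume s: "0 < \<sigma>" and f: "f = thomas_f \<sigma>" and mu: "0 < \<mu>"
    show "p0' \<le> exp (\<mu> * Pc / ((1 - \<beta> * D) * \<eta> * g)
          - m * (LINT t:{0<..}|lborel. exp (- t) * (1 - exp (- \<mu> * (sqrt 2 * \<sigma>) powr (-\<alpha>1) * t powr (-\<alpha>1/2)))))"
      by (rule key[OF mu thomas_expect[OF assms(1) d_meas d_pos d_cdf[unfolded f] s mu]])
  qed
qed

end
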